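(* Let $\Sigma$ be an alphabet and $n\geq 1$. A function $g\colon\mathcal{T}(\Sigma)^n\to\mathcal{T}(\Sigma)$ is WCP if and only if it satisfies the following condition (GCP): for all $a_1,\ldots,a_n\in\Sigma$, all $i\in\{1,\ldots,n\}$ and all $b_i\in\Sigma$, $$\sigma_{a_i}^{b_i}(g(a_1,\ldots,a_n))=\sigma_{a_i}^{b_i}(g(a_1,\ldots,a_{i-1},b_i,a_{i+1},\ldots,a_n)).$$
   Context: Let $\Sigma$ be an alphabet not containing $0,1$. A binary tree over $\Sigma$ is a finite set $t \subseteq \{0,1\}^*\Sigma$ such that for any $ua, vb \in t$ with $ua \neq vb$, $u$ is not a prefix of $v$ and $v$ is not a prefix of $u$; $\mathcal{T}(\Sigma)$ is the set of such trees, $\mathbf 0=\emptyset$, each letter $a$ is identified with $\{a\}$, and $t\star t' = 0.t\cup 1.t'$. Every map $h\colon\Sigma\to\mathcal{T}(\Sigma)$ extends uniquely to an endomorphism of $\langle\mathcal{T}(\Sigma),\star\rangle$, still denoted $h$. For $a\in\Sigma$ and $\tau\in\mathcal{T}(\Sigma)$, the grafting $\sigma_a^\tau$ is the endomorphism with $\sigma_a^\tau(a)=\tau$ and $\sigma_a^\tau(b)=b$ for $b\neq a$. A function $g\colon\mathcal{T}(\Sigma)^n\to\mathcal{T}(\Sigma)$ is WCP if for every idempotent mapping $h\colon\Sigma\to\Sigma$ and all $\vec u,\vec v\in\Sigma^n$, $h(\vec u)=h(\vec v)$ implies $h(g(\vec u))=h(g(\vec v))$, where $h(\langle u_1,\ldots,u_n\rangle)=\langle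 h(u_1),\ldots,h(u_n)\rangle$. *)

theory Defs
  imports Main
begin

text \<open>Letters of the alphabet Sigma are the elements of a type 'a; the path symbols 0,1
are encoded by False/True, so Sigma is automatically disjoint from {0,1}.
An element u a of {0,1}^* Sigma is the pair (u, a).\<close>

type_synonym 'a tree = "(bool list \<times> 'a) set"

definition is_tree :: "'a tree \<Rightarrow> bool" where
  "is_tree t \<longleftrightarrow> finite t \<and>
     (\<forall>u a v b. (u, a) \<in> t \<longrightarrow> (v, b) \<in> t \<longrightarrow> (u, a) \<noteq> (v, b) \<longrightarrow>
        \<not> (\<exists>w. v = u @ w) \<and> \<not> (\<exists>w. u = v @ w))"

definition trees :: "'a tree set" where
  "trees = {t. is_tree t}"

definition zero_tree :: "'a tree" where
  "zero_tree = {}"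

text \<open>A letter a is identified with the tree {a}.\<close>
definition leaf :: "'a \<Rightarrow> 'a tree" where
  "leaf a = {([], a)}"

definition star :: "'a tree \<Rightarrow> 'a tree \<Rightarrow> 'a tree" where
  "star t t' = {(False # u, a) | u a. (u, a) \<in> t} \<union> {(True # u, a) | u a. (u, a) \<in> t'}"

text \<open>The (unique) endomorphism of (T(Sigma), star) extending h : Sigma -> T(Sigma):
each leaf u a is replaced by the tree h a grafted at position u.\<close>
definition hom_ext :: "('a \<Rightarrow> 'a tree) \<Rightarrow> 'a tree \<Rightarrow> 'a tree" where
  "hom_ext h t = {(u @ v, b) | u a v b. (u, a) \<in> t \<and> (v, b) \<in> h a}"

definition graft :: "'a \<Rightarrow> 'a tree \<Rightarrow> 'a tree \<Rightarrow> 'a tree" where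
  "graft a \<tau> = hom_ext (\<lambda>c. if c = a then \<tau> else leaf c)"

definition letter_map :: "('a \<Rightarrow> 'a) \<Rightarrow> 'a tree \<Rightarrow> 'a tree" where
  "letter_map h = hom_ext (leaf \<circ> h)"

text \<open>An n-ary function on trees is modelled as g on lists of trees, used only on lists of
length n.\<close>
definition WCP :: "nat \<Rightarrow> ('a tree list \<Rightarrow> 'a tree) \<Rightarrow> bool" where
  "WCP n g \<longleftrightarrow>
     (\<forall>h :: 'a \<Rightarrow> 'a. h \<circ> h = h \<longrightarrow>
        (\<forall>us vs. length us = n \<longrightarrow> length vs = n \<longrightarrow> map h us = map h vs \<longrightarrow>
           letter_map h (g (map leaf us)) = letter_map h (g (map leaf vs))))"

definition GCP :: "nat \<Rightarrow> ('a tree list \<Rightarrow> 'a tree) \<Rightarrow> bool" where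
  "GCP n g \<longleftrightarrow>
     (\<forall>as. length as = n \<longrightarrow> (\<forall>i < n. \<forall>b.
        graft (as ! i) (leaf b) (g (map leaf as)) =
        graft (as ! i) (leaf b) (g (map leaf (as[i := b])))))"

end

theory Submission
  imports Defs
begin

lemma letter_map_img: "letter_map f t = {(u, f a) | u a. (u, a) \<in> t}"
  unfolding letter_map_def hom_ext_def leaf_def by auto

lemma letter_map_comp: "letter_map f (letter_map g t) = letter_map (f \<circ> g) t"
  unfolding letter_map_img by fastforce

lemma graft_leaf: "graft a (leaf b) = letter_map (\<lambda>c. if c = a then b else c)"
proof -
  have "(\<lambda>c. if c = a then leaf b else leaf c) = leaf \<circ> (\<lambda>c. if c = a then b else c)"
    by (auto simp: fun_eq_iff)
  then show ?thesis unfolding graft_def letter_map_def by simp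
qed

lemma step_list:
  assumes k: "k < length as"
  shows "(take k (map h as) @ drop k as)[k := h (as ! k)] = take (Suc k) (map h as) @ drop (Suc k) as"
    and "(take k (map h as) @ drop k as) ! k = as ! k"
proof -
  show "(take k (map h as) @ drop k as) ! k = as ! k" using k by (simp add: nth_append)
  show "(take k (map h as) @ drop k as)[k := h (as ! k)] = take (Suc k) (map h as) @ drop (Suc k) as"
    using k by (simp add: upd_conv_take_nth_drop take_Suc_conv_app_nth Cons_nth_drop_Suc min_def)
qed

theorem mainTheorem7:
  fixes n :: nat and g :: "'a tree list \<Rightarrow> 'a tree"
  assumes "n \<ge> 1"
    and "\<forall>ts. length ts = n \<longrightarrow> set ts \<subseteq> trees \<longrightarrow> g ts \<in> trees"
  shows "WCP n g \<longleftrightarrow> GCP n g"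
proof
  assume W: "WCP n g"
  show "GCP n g"
    unfolding GCP_def
  proof (intro allI impI)
    fix as :: "'a list" and i b
    assume len: "length as = n" and i: "i < n"
    define f where "f = (\<lambda>c. if c = as ! i then b else c)"
    have idem: "f \<circ> f = f" unfolding f_def by (auto simp: fun_eq_iff)
    have "map f as = map f (as[i := b])"
    proof (rule nth_equalityI)
      show "length (map f as) = length (map f (as[i := b]))" by simp
      fix j assume "j < length (map f as)"
      then have j: "j < length as" by simp
      show "map f as ! j = map f (as[i := b]) ! j"
      proof (cases "j = i")
        case True
        then show ?thesis using j by (simp add: f_def)
      next
        case False
        then show ?thesis using j by simp
      qed
    qed
    then have "letter_map f (g (map leaf as)) = letter_map f (g (map leaf (as[i := b])))"
      using W[unfolded WCP_def, rule_format, OF idem, of as "as[i := b]"] len by simp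
    then show "graft (as ! i) (leaf b) (g (map leaf as)) =
        graft (as ! i) (leaf b) (g (map leaf (as[i := b])))"
      unfolding graft_leaf f_def by simp
  qed
next
  assume G: "GCP n g"
  show "WCP n g"
    unfolding WCP_def
  proof (intro allI impI)
    fix h :: "'a \<Rightarrow> 'a" and us vs :: "'a list"
    assume idem: "h \<circ> h = h" and lu: "length us = n" and lv: "length vs = n"
      and eq: "map h us = map h vs"
    have key: "\<And>as k. length as = n \<Longrightarrow> k \<le> n \<Longrightarrow>
        letter_map h (g (map leaf as)) = letter_map h (g (map leaf (take k (map h as) @ drop k as)))"
    proof -
      fix as :: "'a list" and k
      assume la: "length as = n"
      show "k \<le> n \<Longrightarrow> letter_map h (g (map leaf as)) = letter_map h (g (map leaf (take k (map h as) @ drop k as)))"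
      proof (induction k)
        case 0
        then show ?case by simp
      next
        case (Suc k)
        let ?cs = "take k (map h as) @ drop k as"
        have kl: "k < length as" using Suc la by simp
        have lc: "length ?cs = n" using la kl by simp
        define f where "f = (\<lambda>c. if c = ?cs ! k then h (as ! k) else c)"
        have "graft (?cs ! k) (leaf (h (as ! k))) (g (map leaf ?cs)) =
              graft (?cs ! k) (leaf (h (as ! k))) (g (map leaf (?cs[k := h (as ! k)])))"
          using G[unfolded GCP_def, rule_format, OF lc, of k "h (as ! k)"] kl la by simp
        then have "letter_map f (g (map leaf ?cs)) = letter_map f (g (map leaf (take (Suc k) (map h as) @ drop (Suc k) as)))"
          unfolding graft_leaf f_def step_list[OF kl] by simp
        then have "letter_map h (letter_map f (g (map leaf ?cs))) = letter_map h (letter_map f (g (map leaf (take (Suc k) (map h as) @ drop (Suc k) as))))"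
          by simp
        moreover have "h \<circ> f = h"
          using idem unfolding f_def step_list(2)[OF kl] by (auto simp: fun_eq_iff)
        ultimately have "letter_map h (g (map leaf ?cs)) = letter_map h (g (map leaf (take (Suc k) (map h as) @ drop (Suc k) as)))"
          by (simp add: letter_map_comp)
        with Suc show ?case by simp
      qed
    qed
    have "letter_map h (g (map leaf us)) = letter_map h (g (map leaf (map h us)))"
      using key[OF lu, of n] lu by simp
    also have "\<dots> = letter_map h (g (map leaf (map h vs)))" using eq by simp
    also have "\<dots> = letter_map h (g (map leaf vs))"
      using key[OF lv, of n] lv by simp
    finally show "letter_map h (g (map leaf us)) = letter_map h (g (map leaf vs))" .
  qed
qed

end
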